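(* Let $\mathbb{K}=\mathbb{R}$ or $\mathbb{C}$ and let $\phi:A_1^\ast\to A_2^\ast$ be a morphism of cohomologically connected DGAs over $\mathbb{K}$ inducing isomorphisms on $0$-th and first cohomology and an injection on second cohomology. Let $V=\bigoplus_i V_i$ be a finite-dimensional graded $\mathbb{K}$-vector space, $W_k(V)=\bigoplus_{i\le k}V_i$, and for $i\ge 0$ let $U_i\subset\mathrm{End}(V)$ be the endomorphisms mapping each $V_j$ into $V_{j-i}$ (so $U_iU_j\subset U_{i+j}$). Let $\omega=\sum_{i\ge1}\omega_i$, $\omega_i\in A_2^1\otimes U_i$, satisfy $d\omega+\omega\wedge\omega=0$, i.e. $d\omega_k=-\sum_{i+j=k,\,i,j\ge1}\omega_i\wedge\omega_j$ for all $k$. Put $a_0=\mathrm{Id}_V$. Then there exist $\Omega_i\in A_1^1\otimes U_i$ and $a_i\in A_2^0\otimes U_i$ for all $i\ge1$ such that for every $k\ge1$ \[d\Omega_k=-\sum_{i+j=k,\,i,j\ge1}\Omega_i\wedge\Omega_j,\qquad da_k=-\sum_{i+j=k,\,i\ge1,\,j\ge0}\omega_ia_j+\sum_{i+j=k,\,i\ge0,\,j\ge1}a_i\phi(\Omega_j).\]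
   Context: Products $\omega_i\wedge\omega_j$, $\omega_ia_j$, etc. combine the product of the DGA with composition in $\mathrm{End}(V)$; $\phi$ is applied to the form part. A DGA is cohomologically connected if $H^0\cong\mathbb{K}$. *)

theory Defs
  imports Complex_Main "HOL-Library.Function_Algebras"
begin

text \<open>The algebra is a ring 'a with a 'k-scalar multiplication sc,
A p is the degree-p homogeneous part, and d the differential of degree +1.\<close>

definition is_dga :: "('k::field \<Rightarrow> 'a::ring_1 \<Rightarrow> 'a) \<Rightarrow> (nat \<Rightarrow> 'a set) \<Rightarrow> ('a \<Rightarrow> 'a) \<Rightarrow> bool" where
  "is_dga sc A d \<longleftrightarrow>
    \<comment> \<open>'k-algebra structure\<close>
    (\<forall>c x y. sc c (x + y) = sc c x + sc c y) \<and>
    (\<forall>c c' x. sc (c + c') x = sc c x + sc c' x) \<and>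
    (\<forall>c c' x. sc (c * c') x = sc c (sc c' x)) \<and>
    (\<forall>x. sc 1 x = x) \<and>
    (\<forall>c x y. sc c (x * y) = sc c x * y \<and> sc c (x * y) = x * sc c y) \<and>
    \<comment> \<open>grading: each A p is a subspace, products respect degrees, 1 has degree 0\<close>
    (\<forall>p. 0 \<in> A p \<and> (\<forall>x\<in>A p. \<forall>y\<in>A p. x + y \<in> A p) \<and> (\<forall>x\<in>A p. - x \<in> A p)
        \<and> (\<forall>c. \<forall>x\<in>A p. sc c x \<in> A p)) \<and>
    1 \<in> A 0 \<and>
    (\<forall>p q. \<forall>x\<in>A p. \<forall>y\<in>A q. x * y \<in> A (p + q)) \<and>
    \<comment> \<open>the algebra is the direct sum of the A p\<close>
    (\<forall>x. \<exists>N c. (\<forall>p. c p \<in> A p) \<and> x = (\<Sum>p\<le>N. c p)) \<and>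
    (\<forall>N c. (\<forall>p. c p \<in> A p) \<and> (\<Sum>p\<le>N. c p) = 0 \<longrightarrow> (\<forall>p\<le>N. c p = 0)) \<and>
    \<comment> \<open>differential\<close>
    (\<forall>x y. d (x + y) = d x + d y) \<and>
    (\<forall>c x. d (sc c x) = sc c (d x)) \<and>
    (\<forall>p. \<forall>x\<in>A p. d x \<in> A (Suc p)) \<and>
    (\<forall>x. d (d x) = 0) \<and>
    (\<forall>p. \<forall>x\<in>A p. \<forall>y. d (x * y) = d x * y + (-1) ^ p * x * d y)"

definition cocycles :: "(nat \<Rightarrow> 'a::ring_1 set) \<Rightarrow> ('a \<Rightarrow> 'a) \<Rightarrow> nat \<Rightarrow> 'a set" where
  "cocycles A d p = {x \<in> A p. d x = 0}"

definition coboundaries :: "(nat \<Rightarrow> 'a::ring_1 set) \<Rightarrow> ('a \<Rightarrow> 'a) \<Rightarrow> nat \<Rightarrow> 'a set" where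
  "coboundaries A d p = (if p = 0 then {0} else d ` A (p - 1))"

definition cohom_connected :: "('k::field \<Rightarrow> 'a::ring_1 \<Rightarrow> 'a) \<Rightarrow> (nat \<Rightarrow> 'a set) \<Rightarrow> ('a \<Rightarrow> 'a) \<Rightarrow> bool" where
  "cohom_connected sc A d \<longleftrightarrow> (1::'a) \<noteq> 0 \<and> cocycles A d 0 = range (\<lambda>c. sc c 1)"

definition dga_morphism ::
  "('k::field \<Rightarrow> 'a::ring_1 \<Rightarrow> 'a) \<Rightarrow> (nat \<Rightarrow> 'a set) \<Rightarrow> ('a \<Rightarrow> 'a) \<Rightarrow>
   ('k \<Rightarrow> 'b::ring_1 \<Rightarrow> 'b) \<Rightarrow> (nat \<Rightarrow> 'b set) \<Rightarrow> ('b \<Rightarrow> 'b) \<Rightarrow> ('a \<Rightarrow> 'b) \<Rightarrow> bool" where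
  "dga_morphism sc1 A1 d1 sc2 A2 d2 \<phi> \<longleftrightarrow>
    (\<forall>x y. \<phi> (x + y) = \<phi> x + \<phi> y) \<and>
    (\<forall>c x. \<phi> (sc1 c x) = sc2 c (\<phi> x)) \<and>
    (\<forall>x y. \<phi> (x * y) = \<phi> x * \<phi> y) \<and>
    \<phi> 1 = 1 \<and>
    (\<forall>p. \<phi> ` A1 p \<subseteq> A2 p) \<and>
    (\<forall>x. \<phi> (d1 x) = d2 (\<phi> x))"

definition induces_inj_H ::
  "(nat \<Rightarrow> 'a::ring_1 set) \<Rightarrow> ('a \<Rightarrow> 'a) \<Rightarrow> (nat \<Rightarrow> 'b::ring_1 set) \<Rightarrow> ('b \<Rightarrow> 'b) \<Rightarrow> ('a \<Rightarrow> 'b) \<Rightarrow> nat \<Rightarrow> bool" where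
  "induces_inj_H A1 d1 A2 d2 \<phi> p \<longleftrightarrow>
    (\<forall>x \<in> cocycles A1 d1 p. \<phi> x \<in> coboundaries A2 d2 p \<longrightarrow> x \<in> coboundaries A1 d1 p)"

definition induces_surj_H ::
  "(nat \<Rightarrow> 'a::ring_1 set) \<Rightarrow> ('a \<Rightarrow> 'a) \<Rightarrow> (nat \<Rightarrow> 'b::ring_1 set) \<Rightarrow> ('b \<Rightarrow> 'b) \<Rightarrow> ('a \<Rightarrow> 'b) \<Rightarrow> nat \<Rightarrow> bool" where
  "induces_surj_H A1 d1 A2 d2 \<phi> p \<longleftrightarrow>
    (\<forall>z \<in> cocycles A2 d2 p. \<exists>x \<in> cocycles A1 d1 p. z - \<phi> x \<in> coboundaries A2 d2 p)"

text \<open>Elements of A \<otimes> End(V): V has a finite homogeneous basis indexed by I, basis vector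
r having degree deg r; an element of A \<otimes> End(V) is a matrix with entries in A
(column s = image of basis vector s).  Only entries indexed by I are meaningful.\<close>

text \<open>M lies in A^p \<otimes> U_i: entries in A^p, and M maps V_j into V_{j-i}.\<close>
definition in_AU :: "'n set \<Rightarrow> ('n \<Rightarrow> int) \<Rightarrow> (nat \<Rightarrow> 'a::ring_1 set) \<Rightarrow> nat \<Rightarrow> nat \<Rightarrow> ('n \<Rightarrow> 'n \<Rightarrow> 'a) \<Rightarrow> bool" where
  "in_AU I deg A p i M \<longleftrightarrow>
    (\<forall>r\<in>I. \<forall>s\<in>I. M r s \<in> A p \<and> (deg r + int i \<noteq> deg s \<longrightarrow> M r s = 0))"

definition mmult :: "'n set \<Rightarrow> ('n \<Rightarrow> 'n \<Rightarrow> 'a::ring_1) \<Rightarrow> ('n \<Rightarrow> 'n \<Rightarrow> 'a) \<Rightarrow> ('n \<Rightarrow> 'n \<Rightarrow> 'a)" where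
  "mmult I M N = (\<lambda>r s. \<Sum>t\<in>I. M r t * N t s)"

definition mmap :: "('a \<Rightarrow> 'b) \<Rightarrow> ('n \<Rightarrow> 'n \<Rightarrow> 'a) \<Rightarrow> ('n \<Rightarrow> 'n \<Rightarrow> 'b)" where
  "mmap f M = (\<lambda>r s. f (M r s))"

definition mat_id :: "'n \<Rightarrow> 'n \<Rightarrow> 'a::ring_1" where
  "mat_id = (\<lambda>r s. if r = s then 1 else 0)"

definition meq :: "'n set \<Rightarrow> ('n \<Rightarrow> 'n \<Rightarrow> 'a) \<Rightarrow> ('n \<Rightarrow> 'n \<Rightarrow> 'a) \<Rightarrow> bool" where
  "meq I M N \<longleftrightarrow> (\<forall>r\<in>I. \<forall>s\<in>I. M r s = N r s)"

definition with_id0 :: "(nat \<Rightarrow> 'n \<Rightarrow> 'n \<Rightarrow> 'a::ring_1) \<Rightarrow> nat \<Rightarrow> 'n \<Rightarrow> 'n \<Rightarrow> 'a" where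
  "with_id0 a j = (if j = 0 then mat_id else a j)"

end

theory Submission
  imports Defs
begin

lemma sum_fun_apply: "(sum F S) x = sum (\<lambda>i. F i x) S"
  by (induct S rule: infinite_finite_induct) auto

lemma sum_mat_apply: "(sum F S) r s = sum (\<lambda>i. F i r s) S"
  by (simp add: sum_fun_apply)

definition conv :: "'n set \<Rightarrow> nat \<Rightarrow> (nat \<Rightarrow> 'n \<Rightarrow> 'n \<Rightarrow> 'a::ring_1) \<Rightarrow> (nat \<Rightarrow> 'n \<Rightarrow> 'n \<Rightarrow> 'a) \<Rightarrow> 'n \<Rightarrow> 'n \<Rightarrow> 'a" where
  "conv I k f g = (\<Sum>i=0..k. mmult I (f i) (g (k-i)))"

lemma mmult_add_left: "mmult I (M + N) P = mmult I M P + mmult I N P"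
  by (auto simp: mmult_def fun_eq_iff distrib_right sum.distrib)
lemma mmult_add_right: "mmult I P (M + N) = mmult I P M + mmult I P N"
  by (auto simp: mmult_def fun_eq_iff distrib_left sum.distrib)
lemma mmult_uminus_left: "mmult I (- M) P = - mmult I M P"
proof (rule ext, rule ext)
  fix r s
  have "mmult I (- M) P r s = (\<Sum>t\<in>I. - (M r t * P t s))"
    unfolding mmult_def by (intro sum.cong refl) simp
  also have "\<dots> = - (\<Sum>t\<in>I. M r t * P t s)" by (rule sum_negf)
  finally show "mmult I (- M) P r s = (- mmult I M P) r s" by (simp add: mmult_def)
qed
lemma mmult_uminus_right: "mmult I P (- M) = - mmult I P M"
proof (rule ext, rule ext)
  fix r s
  have "mmult I P (- M) r s = (\<Sum>t\<in>I. - (P r t * M t s))"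
    unfolding mmult_def by (intro sum.cong refl) simp
  also have "\<dots> = - (\<Sum>t\<in>I. P r t * M t s)" by (rule sum_negf)
  finally show "mmult I P (- M) r s = (- mmult I P M) r s" by (simp add: mmult_def)
qed
lemma mmult_diff_right: "mmult I P (M - N) = mmult I P M - mmult I P N"
  by (simp only: diff_conv_add_uminus mmult_add_right mmult_uminus_right)
lemma mmult_zero_left[simp]: "mmult I 0 P = 0"
  by (auto simp: mmult_def fun_eq_iff)
lemma mmult_zero_right[simp]: "mmult I P 0 = 0"
  by (auto simp: mmult_def fun_eq_iff)
lemma mmult_sum_left: "mmult I (sum F S) P = (\<Sum>x\<in>S. mmult I (F x) P)"
proof (rule ext, rule ext)
  fix r s
  have "mmult I (sum F S) P r s = (\<Sum>t\<in>I. \<Sum>x\<in>S. F x r t * P t s)"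
    by (simp add: mmult_def sum_mat_apply sum_distrib_right)
  also have "\<dots> = (\<Sum>x\<in>S. \<Sum>t\<in>I. F x r t * P t s)" by (rule sum.swap)
  finally show "mmult I (sum F S) P r s = (\<Sum>x\<in>S. mmult I (F x) P) r s"
    by (simp add: mmult_def sum_mat_apply)
qed
lemma mmult_sum_right: "mmult I P (sum F S) = (\<Sum>x\<in>S. mmult I P (F x))"
proof (rule ext, rule ext)
  fix r s
  have "mmult I P (sum F S) r s = (\<Sum>t\<in>I. \<Sum>x\<in>S. P r t * F x t s)"
    by (simp add: mmult_def sum_mat_apply sum_distrib_left)
  also have "\<dots> = (\<Sum>x\<in>S. \<Sum>t\<in>I. P r t * F x t s)" by (rule sum.swap)
  finally show "mmult I P (sum F S) r s = (\<Sum>x\<in>S. mmult I P (F x)) r s"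
    by (simp add: mmult_def sum_mat_apply)
qed
lemma mmult_assoc: "mmult I (mmult I M N) P = mmult I M (mmult I N P)"
proof (rule ext, rule ext)
  fix r s
  have "mmult I (mmult I M N) P r s = (\<Sum>u\<in>I. \<Sum>t\<in>I. M r t * N t u * P u s)"
    by (simp add: mmult_def sum_distrib_right)
  also have "\<dots> = (\<Sum>t\<in>I. \<Sum>u\<in>I. M r t * N t u * P u s)" by (rule sum.swap)
  also have "\<dots> = mmult I M (mmult I N P) r s"
    by (simp add: mmult_def sum_distrib_left mult.assoc)
  finally show "mmult I (mmult I M N) P r s = mmult I M (mmult I N P) r s" .
qed

lemma conv_add_left: "conv I k (f + g) h = conv I k f h + conv I k g h"
  by (simp add: conv_def mmult_add_left sum.distrib)
lemma conv_add_right: "conv I k h (f + g) = conv I k h f + conv I k h g"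
  by (simp add: conv_def mmult_add_right sum.distrib)
lemma conv_uminus_left: "conv I k (- f) h = - conv I k f h"
  by (simp add: conv_def mmult_uminus_left sum_negf)
lemma conv_uminus_right: "conv I k h (- f) = - conv I k h f"
  by (simp add: conv_def mmult_uminus_right sum_negf)

lemma assoc_lemma:
  fixes k :: nat and F :: "nat \<Rightarrow> nat \<Rightarrow> nat \<Rightarrow> 'a::comm_monoid_add"
  shows "(\<Sum>j=0..k. \<Sum>i=0..j. F i (j - i) (n - j)) = (\<Sum>j=0..k. \<Sum>i=0..k - j. F j i (n - j - i))"
  by (induct k) (simp_all add: Suc_diff_le sum.distrib add.assoc)

lemma conv_assoc: "conv I k (\<lambda>n. conv I n f g) h = conv I k f (\<lambda>n. conv I n g h)"
proof -
  have "(\<Sum>j=0..k. \<Sum>i=0..j. mmult I (mmult I (f i) (g (j - i))) (h (k - j)))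
      = (\<Sum>j=0..k. \<Sum>i=0..k - j. mmult I (mmult I (f j) (g i)) (h (k - j - i)))"
    by (rule assoc_lemma[where F="\<lambda>a b c. mmult I (mmult I (f a) (g b)) (h c)"])
  then show ?thesis
    by (simp add: conv_def mmult_sum_left mmult_sum_right mmult_assoc)
qed

lemma conv_cong: "(\<And>i. i \<le> k \<Longrightarrow> f i = f' i) \<Longrightarrow> (\<And>i. i \<le> k \<Longrightarrow> g i = g' i) \<Longrightarrow>
   conv I k f g = conv I k f' g'"
  unfolding conv_def by (intro sum.cong) auto

lemma conv_eq_below_left: "(\<And>n. n < k \<Longrightarrow> f n = f' n) \<Longrightarrow> g 0 = 0 \<Longrightarrow> conv I k f g = conv I k f' g"
  unfolding conv_def
proof (intro sum.cong refl)
  fix i assume h: "\<And>n. n < k \<Longrightarrow> f n = f' n" "g 0 = 0" and i: "i \<in> {0..k}"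
  show "mmult I (f i) (g (k - i)) = mmult I (f' i) (g (k - i))"
  proof (cases "i < k")
    case True then show ?thesis by (simp add: h)
  next
    case False then have "k - i = 0" using i by simp
    then show ?thesis by (simp add: h)
  qed
qed

lemma conv_eq_below_right: "(\<And>n. n < k \<Longrightarrow> g n = g' n) \<Longrightarrow> f 0 = 0 \<Longrightarrow> conv I k f g = conv I k f g'"
  unfolding conv_def
proof (intro sum.cong refl)
  fix i assume h: "\<And>n. n < k \<Longrightarrow> g n = g' n" "f 0 = 0" and i: "i \<in> {0..k}"
  show "mmult I (f i) (g (k - i)) = mmult I (f i) (g' (k - i))"
  proof (cases "i = 0")
    case True then show ?thesis by (simp add: h)
  next
    case False then have "k - i < k" using i by simp
    then show ?thesis by (simp add: h)
  qed
qed

lemma conv_split_right: "(\<And>n. n < k \<Longrightarrow> g n = g' n) \<Longrightarrow>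
   conv I k f g = conv I k f g' + mmult I (f 0) (g k - g' k)"
proof -
  assume h: "\<And>n. n < k \<Longrightarrow> g n = g' n"
  have "conv I k f g = mmult I (f 0) (g k) + (\<Sum>i=Suc 0..k. mmult I (f i) (g (k-i)))"
    unfolding conv_def by (simp add: sum.atLeast_Suc_atMost)
  moreover have "conv I k f g' = mmult I (f 0) (g' k) + (\<Sum>i=Suc 0..k. mmult I (f i) (g' (k-i)))"
    unfolding conv_def by (simp add: sum.atLeast_Suc_atMost)
  moreover have "(\<Sum>i=Suc 0..k. mmult I (f i) (g (k-i))) = (\<Sum>i=Suc 0..k. mmult I (f i) (g' (k-i)))"
    by (intro sum.cong refl) (simp add: h)
  moreover have "mmult I (f 0) (g k) = mmult I (f 0) (g' k) + mmult I (f 0) (g k - g' k)"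
    by (simp add: mmult_diff_right)
  ultimately show ?thesis by (simp only: add_ac)
qed


lemma dga_grp: "is_dga sc A d \<Longrightarrow> (\<forall>p. 0 \<in> A p \<and> (\<forall>x\<in>A p. \<forall>y\<in>A p. x + y \<in> A p) \<and> (\<forall>x\<in>A p. - x \<in> A p)
        \<and> (\<forall>c. \<forall>x\<in>A p. sc c x \<in> A p))"
  unfolding is_dga_def by (elim conjE) assumption
lemma dga_0: "is_dga sc A d \<Longrightarrow> 0 \<in> A p" using dga_grp by blast
lemma dga_add: "is_dga sc A d \<Longrightarrow> x \<in> A p \<Longrightarrow> y \<in> A p \<Longrightarrow> x + y \<in> A p" using dga_grp by blast
lemma dga_neg: "is_dga sc A d \<Longrightarrow> x \<in> A p \<Longrightarrow> - x \<in> A p" using dga_grp by blast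
lemma dga_diff: "is_dga sc A d \<Longrightarrow> x \<in> A p \<Longrightarrow> y \<in> A p \<Longrightarrow> x - y \<in> A p"
  by (simp only: diff_conv_add_uminus dga_add dga_neg)
lemma dga_one: "is_dga sc A d \<Longrightarrow> 1 \<in> A 0" unfolding is_dga_def by (elim conjE) assumption
lemma dga_mul0: "is_dga sc A d \<Longrightarrow> (\<forall>p q. \<forall>x\<in>A p. \<forall>y\<in>A q. x * y \<in> A (p + q))"
  unfolding is_dga_def by (elim conjE) assumption
lemma dga_mul: "is_dga sc A d \<Longrightarrow> x \<in> A p \<Longrightarrow> y \<in> A q \<Longrightarrow> x * y \<in> A (p + q)" using dga_mul0 by blast
lemma dga_additive: "is_dga sc A d \<Longrightarrow> additive d"
  unfolding additive_def is_dga_def by (elim conjE) assumption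
lemma dga_deg0: "is_dga sc A d \<Longrightarrow> (\<forall>p. \<forall>x\<in>A p. d x \<in> A (Suc p))"
  unfolding is_dga_def by (elim conjE) assumption
lemma dga_deg: "is_dga sc A d \<Longrightarrow> x \<in> A p \<Longrightarrow> d x \<in> A (Suc p)" using dga_deg0 by blast
lemma dga_dd0: "is_dga sc A d \<Longrightarrow> (\<forall>x. d (d x) = 0)"
  unfolding is_dga_def by (elim conjE) assumption
lemma dga_dd: "is_dga sc A d \<Longrightarrow> d (d x) = 0" using dga_dd0 by blast
lemma dga_leib0: "is_dga sc A d \<Longrightarrow> (\<forall>p. \<forall>x\<in>A p. \<forall>y. d (x * y) = d x * y + (-1) ^ p * x * d y)"
  unfolding is_dga_def by (elim conjE) assumption
lemma dga_leib: "is_dga sc A d \<Longrightarrow> x \<in> A p \<Longrightarrow> d (x * y) = d x * y + (-1) ^ p * x * d y"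
  using dga_leib0 by blast
lemma dga_sum: "is_dga sc A d \<Longrightarrow> (\<And>i. i \<in> S \<Longrightarrow> F i \<in> A p) \<Longrightarrow> sum F S \<in> A p"
  by (induct S rule: infinite_finite_induct) (auto intro: dga_add dga_0)
lemma dga_d1: "is_dga sc A d \<Longrightarrow> d 1 = 0"
proof -
  assume a: "is_dga sc A d"
  have "d (1 * 1) = d 1 * 1 + (-1) ^ 0 * 1 * d 1" by (rule dga_leib[OF a dga_one[OF a]])
  then have "d 1 = d 1 + d 1" by simp
  then show ?thesis by simp
qed

lemma mor_additive: "dga_morphism sc1 A1 d1 sc2 A2 d2 \<phi> \<Longrightarrow> additive \<phi>"
  unfolding dga_morphism_def additive_def by (elim conjE) assumption
lemma mor_mult0: "dga_morphism sc1 A1 d1 sc2 A2 d2 \<phi> \<Longrightarrow> (\<forall>x y. \<phi> (x * y) = \<phi> x * \<phi> y)"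
  unfolding dga_morphism_def by (elim conjE) assumption
lemma mor_mult: "dga_morphism sc1 A1 d1 sc2 A2 d2 \<phi> \<Longrightarrow> \<phi> (x * y) = \<phi> x * \<phi> y"
  using mor_mult0 by blast
lemma mor_deg0: "dga_morphism sc1 A1 d1 sc2 A2 d2 \<phi> \<Longrightarrow> (\<forall>p. \<phi> ` A1 p \<subseteq> A2 p)"
  unfolding dga_morphism_def by (elim conjE) assumption
lemma mor_deg: "dga_morphism sc1 A1 d1 sc2 A2 d2 \<phi> \<Longrightarrow> x \<in> A1 p \<Longrightarrow> \<phi> x \<in> A2 p"
  using mor_deg0 by blast
lemma mor_d0: "dga_morphism sc1 A1 d1 sc2 A2 d2 \<phi> \<Longrightarrow> (\<forall>x. \<phi> (d1 x) = d2 (\<phi> x))"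
  unfolding dga_morphism_def by (elim conjE) assumption
lemma mor_d: "dga_morphism sc1 A1 d1 sc2 A2 d2 \<phi> \<Longrightarrow> \<phi> (d1 x) = d2 (\<phi> x)"
  using mor_d0 by blast

lemma mmap_add: "additive f \<Longrightarrow> mmap f (M + N) = mmap f M + mmap f N"
  by (rule ext, rule ext) (simp add: mmap_def additive.add)
lemma mmap_uminus: "additive f \<Longrightarrow> mmap f (- M) = - mmap f M"
  by (rule ext, rule ext) (simp add: mmap_def additive.minus)
lemma mmap_zero: "additive f \<Longrightarrow> mmap f 0 = 0"
  by (rule ext, rule ext) (simp add: mmap_def additive.zero)
lemma mmap_diff: "additive f \<Longrightarrow> mmap f (M - N) = mmap f M - mmap f N"
  by (rule ext, rule ext) (simp add: mmap_def additive.diff)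
lemma mmap_sum: "additive f \<Longrightarrow> mmap f (sum F S) = (\<Sum>x\<in>S. mmap f (F x))"
  by (rule ext, rule ext) (simp add: mmap_def additive.sum sum_mat_apply)

lemma mmap_mmult: "additive f \<Longrightarrow> (\<And>x y. f (x * y) = f x * f y) \<Longrightarrow>
   mmap f (mmult I M N) = mmult I (mmap f M) (mmap f N)"
  by (rule ext, rule ext) (simp add: mmap_def mmult_def additive.sum)

lemma mmap_conv: "additive f \<Longrightarrow> (\<And>x y. f (x * y) = f x * f y) \<Longrightarrow>
   mmap f (conv I k F G) = conv I k (\<lambda>n. mmap f (F n)) (\<lambda>n. mmap f (G n))"
  unfolding conv_def by (simp add: mmap_sum mmap_mmult)

lemma leib1: assumes "is_dga sc A d" "\<And>r s. M r s \<in> A 1"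
  shows "mmap d (mmult I M N) = mmult I (mmap d M) N - mmult I M (mmap d N)"
proof (rule ext, rule ext)
  fix r s
  interpret additive d by (rule dga_additive[OF assms(1)])
  have "mmap d (mmult I M N) r s = (\<Sum>t\<in>I. d (M r t * N t s))"
    by (simp add: mmap_def mmult_def sum)
  also have "\<dots> = (\<Sum>t\<in>I. d (M r t) * N t s - M r t * d (N t s))"
    by (intro sum.cong refl) (simp add: dga_leib[OF assms(1) assms(2)])
  also have "\<dots> = (\<Sum>t\<in>I. d (M r t) * N t s) - (\<Sum>t\<in>I. M r t * d (N t s))"
    by (rule sum_subtractf)
  finally show "mmap d (mmult I M N) r s = (mmult I (mmap d M) N - mmult I M (mmap d N)) r s"
    by (simp add: mmap_def mmult_def)
qed

lemma leib0: assumes "is_dga sc A d" "\<And>r s. M r s \<in> A 0"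
  shows "mmap d (mmult I M N) = mmult I (mmap d M) N + mmult I M (mmap d N)"
proof (rule ext, rule ext)
  fix r s
  interpret additive d by (rule dga_additive[OF assms(1)])
  have "mmap d (mmult I M N) r s = (\<Sum>t\<in>I. d (M r t * N t s))"
    by (simp add: mmap_def mmult_def sum)
  also have "\<dots> = (\<Sum>t\<in>I. d (M r t) * N t s + M r t * d (N t s))"
    by (intro sum.cong refl) (simp add: dga_leib[OF assms(1) assms(2)])
  also have "\<dots> = (\<Sum>t\<in>I. d (M r t) * N t s) + (\<Sum>t\<in>I. M r t * d (N t s))"
    by (rule sum.distrib)
  finally show "mmap d (mmult I M N) r s = (mmult I (mmap d M) N + mmult I M (mmap d N)) r s"
    by (simp add: mmap_def mmult_def)
qed

lemma conv_diff_lr: "(\<Sum>i=0..k. mmult I (F i) (G (k-i)) - mmult I (F' i) (G' (k-i)))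
   = conv I k F G - conv I k F' G'"
  unfolding conv_def by (rule sum_subtractf)

lemma dconv1: assumes "is_dga sc A d" "\<And>n r s. F n r s \<in> A 1"
  shows "mmap d (conv I k F G) = conv I k (\<lambda>n. mmap d (F n)) G - conv I k F (\<lambda>n. mmap d (G n))"
proof -
  have ad: "additive d" by (rule dga_additive[OF assms(1)])
  have "mmap d (conv I k F G) = (\<Sum>i=0..k. mmap d (mmult I (F i) (G (k-i))))"
    unfolding conv_def by (rule mmap_sum[OF ad])
  also have "\<dots> = (\<Sum>i=0..k. mmult I (mmap d (F i)) (G (k-i)) - mmult I (F i) (mmap d (G (k-i))))"
    by (intro sum.cong refl leib1[OF assms(1) assms(2)])
  also have "\<dots> = conv I k (\<lambda>n. mmap d (F n)) G - conv I k F (\<lambda>n. mmap d (G n))"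
    by (rule conv_diff_lr)
  finally show ?thesis .
qed

lemma dconv0: assumes "is_dga sc A d" "\<And>n r s. F n r s \<in> A 0"
  shows "mmap d (conv I k F G) = conv I k (\<lambda>n. mmap d (F n)) G + conv I k F (\<lambda>n. mmap d (G n))"
proof -
  have ad: "additive d" by (rule dga_additive[OF assms(1)])
  have "mmap d (conv I k F G) = (\<Sum>i=0..k. mmap d (mmult I (F i) (G (k-i))))"
    unfolding conv_def by (rule mmap_sum[OF ad])
  also have "\<dots> = (\<Sum>i=0..k. mmult I (mmap d (F i)) (G (k-i)) + mmult I (F i) (mmap d (G (k-i))))"
    by (intro sum.cong refl leib0[OF assms(1) assms(2)])
  also have "\<dots> = conv I k (\<lambda>n. mmap d (F n)) G + conv I k F (\<lambda>n. mmap d (G n))"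
    unfolding conv_def by (rule sum.distrib)
  finally show ?thesis .
qed

definition isM :: "'n set \<Rightarrow> ('n \<Rightarrow> int) \<Rightarrow> (nat \<Rightarrow> 'a::ring_1 set) \<Rightarrow> nat \<Rightarrow> nat \<Rightarrow> ('n \<Rightarrow> 'n \<Rightarrow> 'a) \<Rightarrow> bool" where
  "isM I deg A p i M \<longleftrightarrow> (\<forall>r s. M r s \<in> A p) \<and> (\<forall>r s. (r \<notin> I \<or> s \<notin> I \<or> deg r + int i \<noteq> deg s) \<longrightarrow> M r s = 0)"

lemma isM_zero: "is_dga sc A d \<Longrightarrow> isM I deg A p i 0"
  by (simp add: isM_def dga_0)
lemma isM_add: "is_dga sc A d \<Longrightarrow> isM I deg A p i M \<Longrightarrow> isM I deg A p i N \<Longrightarrow> isM I deg A p i (M + N)"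
  by (simp add: isM_def dga_add)
lemma isM_uminus: "is_dga sc A d \<Longrightarrow> isM I deg A p i M \<Longrightarrow> isM I deg A p i (- M)"
  by (simp add: isM_def dga_neg)
lemma isM_diff: "is_dga sc A d \<Longrightarrow> isM I deg A p i M \<Longrightarrow> isM I deg A p i N \<Longrightarrow> isM I deg A p i (M - N)"
  by (simp add: isM_def dga_diff)
lemma isM_sum: "is_dga sc A d \<Longrightarrow> (\<And>x. x \<in> S \<Longrightarrow> isM I deg A p i (F x)) \<Longrightarrow> isM I deg A p i (sum F S)"
  by (induct S rule: infinite_finite_induct) (auto intro: isM_add isM_zero)

lemma isM_mmult: assumes "is_dga sc A d" "isM I deg A p i M" "isM I deg A q j N"
  shows "isM I deg A (p + q) (i + j) (mmult I M N)"
  unfolding isM_def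
proof (intro conjI allI impI)
  fix r s
  show "mmult I M N r s \<in> A (p + q)"
    unfolding mmult_def using assms
    by (intro dga_sum[OF assms(1)] dga_mul[OF assms(1)]) (auto simp: isM_def)
next
  fix r s assume h: "r \<notin> I \<or> s \<notin> I \<or> deg r + int (i + j) \<noteq> deg s"
  have "\<And>t. t \<in> I \<Longrightarrow> M r t * N t s = 0"
  proof -
    fix t assume t: "t \<in> I"
    show "M r t * N t s = 0"
    proof (cases "M r t = 0")
      case False
      then have "r \<in> I" "deg r + int i = deg t" using assms(2) t unfolding isM_def by blast+
      with h have "s \<notin> I \<or> deg t + int j \<noteq> deg s" by auto
      then have "N t s = 0" using assms(3) unfolding isM_def by blast
      then show ?thesis by simp
    qed simp
  qed
  then show "mmult I M N r s = 0" unfolding mmult_def by simp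
qed

lemma isM_conv: assumes "is_dga sc A d" "\<And>n. isM I deg A p n (F n)" "\<And>n. isM I deg A q n (G n)"
  shows "isM I deg A (p + q) k (conv I k F G)"
  unfolding conv_def
proof (rule isM_sum[OF assms(1)])
  fix i assume "i \<in> {0..k}"
  then have e: "i + (k - i) = k" by simp
  show "isM I deg A (p + q) k (mmult I (F i) (G (k - i)))"
    using isM_mmult[OF assms(1) assms(2)[of i] assms(3)[of "k-i"]] by (simp only: e)
qed

lemma isM_mmap_d: "is_dga sc A d \<Longrightarrow> isM I deg A p i M \<Longrightarrow> isM I deg A (Suc p) i (mmap d M)"
  unfolding isM_def mmap_def
  using dga_deg additive.zero[OF dga_additive] by metis

lemma isM_mmap_phi: "dga_morphism sc1 A1 d1 sc2 A2 d2 \<phi> \<Longrightarrow> isM I deg A1 p i M \<Longrightarrow> isM I deg A2 p i (mmap \<phi> M)"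
  unfolding isM_def mmap_def
  using mor_deg additive.zero[OF mor_additive] by metis

definition Idr :: "'n set \<Rightarrow> 'n \<Rightarrow> 'n \<Rightarrow> 'a::ring_1" where
  "Idr I = (\<lambda>r s. if r \<in> I \<and> s \<in> I \<and> r = s then 1 else 0)"

lemma isM_Idr: "is_dga sc A d \<Longrightarrow> isM I deg A 0 0 (Idr I)"
  unfolding isM_def Idr_def by (auto simp: dga_one dga_0)

lemma mmult_Idr: assumes "finite I" "\<And>r s. r \<notin> I \<Longrightarrow> M r s = 0"
  shows "mmult I (Idr I) M = M"
proof (rule ext, rule ext)
  fix r s
  show "mmult I (Idr I) M r s = M r s"
  proof (cases "r \<in> I")
    case True
    have "mmult I (Idr I) M r s = (\<Sum>t\<in>I. if r = t then M t s else 0)"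
      unfolding mmult_def Idr_def by (intro sum.cong refl) (auto simp: True)
    also have "\<dots> = M r s" using True assms(1) by simp
    finally show ?thesis .
  next
    case False then show ?thesis by (simp add: mmult_def Idr_def assms(2))
  qed
qed


lemma isM_in: "isM I deg A p i M \<Longrightarrow> M r s \<in> A p" unfolding isM_def by blast
lemma isM_off: "isM I deg A p i M \<Longrightarrow> \<not> (r \<in> I \<and> s \<in> I \<and> deg r + int i = deg s) \<Longrightarrow> M r s = 0"
  unfolding isM_def by blast

lemma step:
  fixes sc1 :: "'k::field \<Rightarrow> 'a::ring_1 \<Rightarrow> 'a"
    and sc2 :: "'k \<Rightarrow> 'b::ring_1 \<Rightarrow> 'b"
    and \<phi> :: "'a \<Rightarrow> 'b" and I :: "'n set" and deg :: "'n \<Rightarrow> int"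
    and w :: "nat \<Rightarrow> 'n \<Rightarrow> 'n \<Rightarrow> 'b" and a :: "nat \<Rightarrow> 'n \<Rightarrow> 'n \<Rightarrow> 'b"
    and Om :: "nat \<Rightarrow> 'n \<Rightarrow> 'n \<Rightarrow> 'a"
  assumes D1: "is_dga sc1 A1 d1" and D2: "is_dga sc2 A2 d2"
    and Mor: "dga_morphism sc1 A1 d1 sc2 A2 d2 \<phi>"
    and inj2: "induces_inj_H A1 d1 A2 d2 \<phi> 2" and surj1: "induces_surj_H A1 d1 A2 d2 \<phi> 1"
    and fin: "finite I" and k: "1 \<le> k"
    and w0: "w 0 = 0" and wM: "\<And>n. isM I deg A2 1 n (w n)"
    and wd: "\<And>n. mmap d2 (w n) = - conv I n w w"
    and Om0: "Om 0 = 0" and Omk: "Om k = 0" and OmM: "\<And>n. isM I deg A1 1 n (Om n)"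
    and a0: "a 0 = Idr I" and ak: "a k = 0" and aM: "\<And>n. isM I deg A2 0 n (a n)"
    and Omd: "\<And>n. n < k \<Longrightarrow> mmap d1 (Om n) = - conv I n Om Om"
    and ad: "\<And>n. n < k \<Longrightarrow> mmap d2 (a n) = - conv I n w a + conv I n a (\<lambda>n. mmap \<phi> (Om n))"
  shows "\<exists>X Y. isM I deg A1 1 k X \<and> isM I deg A2 0 k Y \<and>
     mmap d1 X = - conv I k (Om(k:=X)) (Om(k:=X)) \<and>
     mmap d2 Y = - conv I k w (a(k:=Y)) + conv I k (a(k:=Y)) (\<lambda>n. mmap \<phi> ((Om(k:=X)) n))"
proof -
  have ad1: "additive d1" by (rule dga_additive[OF D1])
  have ad2: "additive d2" by (rule dga_additive[OF D2])
  have adp: "additive \<phi>" by (rule mor_additive[OF Mor])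
  have pm: "\<And>x y. \<phi> (x * y) = \<phi> x * \<phi> y" by (rule mor_mult[OF Mor])
  define \<Phi> where "\<Phi> = (\<lambda>n. mmap \<phi> (Om n))"
  have \<Phi>0: "\<Phi> 0 = 0" by (simp add: \<Phi>_def Om0 mmap_zero[OF adp])
  have \<Phi>M: "\<And>n. isM I deg A2 1 n (\<Phi> n)" unfolding \<Phi>_def by (rule isM_mmap_phi[OF Mor OmM])
  have kpos: "k \<noteq> 0" using k by simp
  have Om1: "\<And>n r s. Om n r s \<in> A1 1" by (rule isM_in[OF OmM])
  have w1: "\<And>n r s. w n r s \<in> A2 1" by (rule isM_in[OF wM])
  have a00: "\<And>n r s. a n r s \<in> A2 0" by (rule isM_in[OF aM])

  define R where "R = - conv I k Om Om"
  have RM: "isM I deg A1 2 k R"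
    unfolding R_def using isM_uminus[OF D1 isM_conv[OF D1 OmM OmM, where k=k]] by (simp only: one_add_one)
  define S where "S = - conv I k w a + conv I k a \<Phi>"
  have SM: "isM I deg A2 1 k S"
  proof -
    have "isM I deg A2 1 k (conv I k w a)" using isM_conv[OF D2 wM aM, where k=k] by (simp only: add_0_right)
    moreover have "isM I deg A2 1 k (conv I k a \<Phi>)" using isM_conv[OF D2 aM \<Phi>M, where k=k] by (simp only: add_0_left)
    ultimately show ?thesis unfolding S_def by (intro isM_add[OF D2] isM_uminus[OF D2])
  qed

  define cOO where "cOO = (\<lambda>n. conv I n Om Om)"
  have A1: "conv I k (\<lambda>n. mmap d1 (Om n)) Om = conv I k (- cOO) Om"
    by (rule conv_eq_below_left) (simp_all add: Omd cOO_def Om0)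
  have A2: "conv I k Om (\<lambda>n. mmap d1 (Om n)) = conv I k Om (- cOO)"
    by (rule conv_eq_below_right) (simp_all add: Omd cOO_def Om0)
  have RA: "mmap d1 R = 0"
  proof -
    have "mmap d1 R = - (conv I k (\<lambda>n. mmap d1 (Om n)) Om - conv I k Om (\<lambda>n. mmap d1 (Om n)))"
      unfolding R_def by (simp only: mmap_uminus[OF ad1] dconv1[OF D1 Om1])
    also have "\<dots> = - (- conv I k cOO Om + conv I k Om cOO)"
      by (simp only: A1 A2 conv_uminus_left conv_uminus_right diff_conv_add_uminus minus_minus)
    also have "conv I k cOO Om = conv I k Om cOO"
      unfolding cOO_def by (rule conv_assoc)
    finally show ?thesis by (simp only: left_minus minus_zero)
  qed

  define cww where "cww = (\<lambda>n. conv I n w w)"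
  define cwa where "cwa = (\<lambda>n. conv I n w a)"
  define caP where "caP = (\<lambda>n. conv I n a \<Phi>)"
  define cPP where "cPP = (\<lambda>n. conv I n \<Phi> \<Phi>)"
  have Dw: "(\<lambda>n. mmap d2 (w n)) = - cww" by (rule ext) (simp add: wd cww_def)
  have B1: "conv I k w (\<lambda>n. mmap d2 (a n)) = conv I k w (- cwa + caP)"
    by (rule conv_eq_below_right) (simp_all add: ad cwa_def caP_def \<Phi>_def w0)
  have B2: "conv I k (\<lambda>n. mmap d2 (a n)) \<Phi> = conv I k (- cwa + caP) \<Phi>"
    by (rule conv_eq_below_left) (simp_all add: ad cwa_def caP_def \<Phi>_def Om0 mmap_zero[OF adp])
  have DP: "\<And>n. mmap d2 (\<Phi> n) = mmap \<phi> (mmap d1 (Om n))"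
    unfolding \<Phi>_def mmap_def by (simp add: mor_d[OF Mor])
  have DPk: "mmap d2 (\<Phi> k) = 0" by (simp add: DP Omk mmap_zero[OF ad1] mmap_zero[OF adp])
  have B3: "conv I k a (\<lambda>n. mmap d2 (\<Phi> n)) = conv I k a (- cPP) + mmult I (a 0) (mmap d2 (\<Phi> k) - (- cPP) k)"
  proof (rule conv_split_right)
    fix n assume nk: "n < k"
    have "mmap d2 (\<Phi> n) = mmap \<phi> (- conv I n Om Om)" by (simp only: DP Omd[OF nk])
    also have "\<dots> = - conv I n \<Phi> \<Phi>" unfolding \<Phi>_def by (simp only: mmap_uminus[OF adp] mmap_conv[OF adp pm])
    finally show "mmap d2 (\<Phi> n) = (- cPP) n" by (simp add: cPP_def)
  qed
  have cPPM: "isM I deg A2 2 k (cPP k)"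
    unfolding cPP_def using isM_conv[OF D2 \<Phi>M \<Phi>M, where k=k] by (simp only: one_add_one)
  have B4: "mmult I (a 0) (mmap d2 (\<Phi> k) - (- cPP) k) = cPP k"
    unfolding a0 DPk by (simp, rule mmult_Idr[OF fin], rule isM_off[OF cPPM], simp)
  have as1: "conv I k cww a = conv I k w cwa" unfolding cww_def cwa_def by (rule conv_assoc)
  have as2: "conv I k cwa \<Phi> = conv I k w caP" unfolding cwa_def caP_def by (rule conv_assoc)
  have as3: "conv I k caP \<Phi> = conv I k a cPP" unfolding caP_def cPP_def by (rule conv_assoc)
  have SB: "mmap d2 S = cPP k"
  proof -
    have "mmap d2 S = - (conv I k (\<lambda>n. mmap d2 (w n)) a - conv I k w (\<lambda>n. mmap d2 (a n)))
         + (conv I k (\<lambda>n. mmap d2 (a n)) \<Phi> + conv I k a (\<lambda>n. mmap d2 (\<Phi> n)))"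
      unfolding S_def by (simp only: mmap_add[OF ad2] mmap_uminus[OF ad2] dconv1[OF D2 w1] dconv0[OF D2 a00])
    also have "\<dots> = - (- conv I k cww a - (- conv I k w cwa + conv I k w caP))
         + ((- conv I k cwa \<Phi> + conv I k caP \<Phi>) + (- conv I k a cPP + cPP k))"
      by (simp only: Dw B1 B2 B3 B4 conv_uminus_left conv_uminus_right conv_add_left conv_add_right)
    also have "\<dots> = cPP k" by (simp only: as1 as2 as3) (simp add: algebra_simps)
    finally show ?thesis .
  qed
  have phiR: "mmap \<phi> R = mmap d2 (- S)"
    unfolding R_def by (simp add: mmap_uminus[OF adp] mmap_uminus[OF ad2] mmap_conv[OF adp pm] SB cPP_def \<Phi>_def)

  have "\<forall>r s. \<exists>y. y \<in> A1 1 \<and> d1 y = R r s \<and> (\<not> (r \<in> I \<and> s \<in> I \<and> deg r + int k = deg s) \<longrightarrow> y = 0)"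
  proof (intro allI)
    fix r s
    show "\<exists>y. y \<in> A1 1 \<and> d1 y = R r s \<and> (\<not> (r \<in> I \<and> s \<in> I \<and> deg r + int k = deg s) \<longrightarrow> y = 0)"
    proof (cases "r \<in> I \<and> s \<in> I \<and> deg r + int k = deg s")
      case False
      show ?thesis by (intro exI[of _ 0]) (simp add: dga_0[OF D1] additive.zero[OF ad1] isM_off[OF RM False])
    next
      case True
      have "d1 (R r s) = 0" using fun_cong[OF fun_cong[OF RA, of r], of s] by (simp add: mmap_def)
      then have cz: "R r s \<in> cocycles A1 d1 2"
        using isM_in[OF RM] unfolding cocycles_def by simp
      have "\<phi> (R r s) = d2 (- S r s)" using fun_cong[OF fun_cong[OF phiR, of r], of s]
        by (simp add: mmap_def)
      moreover have "- S r s \<in> A2 1" using isM_in[OF SM] dga_neg[OF D2] by blast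
      ultimately have "\<phi> (R r s) \<in> coboundaries A2 d2 2" unfolding coboundaries_def by simp
      then have "R r s \<in> coboundaries A1 d1 2" using inj2 cz unfolding induces_inj_H_def by blast
      then obtain y where "y \<in> A1 1" "R r s = d1 y" unfolding coboundaries_def by auto
      then show ?thesis using True by auto
    qed
  qed
  then obtain X0 where X0: "\<And>r s. X0 r s \<in> A1 1 \<and> d1 (X0 r s) = R r s \<and>
      (\<not> (r \<in> I \<and> s \<in> I \<and> deg r + int k = deg s) \<longrightarrow> X0 r s = 0)" by metis
  have X0M: "isM I deg A1 1 k X0" unfolding isM_def using X0 by blast
  have dX0: "mmap d1 X0 = R" by (rule ext, rule ext) (simp add: mmap_def X0)
  define Z where "Z = S + mmap \<phi> X0"
  have ZM: "isM I deg A2 1 k Z" unfolding Z_def by (rule isM_add[OF D2 SM isM_mmap_phi[OF Mor X0M]])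
  have dZ: "mmap d2 Z = 0"
  proof -
    have "mmap d2 (mmap \<phi> X0) = mmap \<phi> (mmap d1 X0)"
      unfolding mmap_def by (simp add: mor_d[OF Mor])
    then show ?thesis unfolding Z_def
      by (simp add: mmap_add[OF ad2] dX0 phiR mmap_uminus[OF ad2])
  qed
  have "\<forall>r s. \<exists>p. fst p \<in> A1 1 \<and> d1 (fst p) = 0 \<and> snd p \<in> A2 0 \<and> Z r s - \<phi> (fst p) = d2 (snd p) \<and>
      (\<not> (r \<in> I \<and> s \<in> I \<and> deg r + int k = deg s) \<longrightarrow> fst p = 0 \<and> snd p = 0)"
  proof (intro allI)
    fix r s
    show "\<exists>p. fst p \<in> A1 1 \<and> d1 (fst p) = 0 \<and> snd p \<in> A2 0 \<and> Z r s - \<phi> (fst p) = d2 (snd p) \<and>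
      (\<not> (r \<in> I \<and> s \<in> I \<and> deg r + int k = deg s) \<longrightarrow> fst p = 0 \<and> snd p = 0)"
    proof (cases "r \<in> I \<and> s \<in> I \<and> deg r + int k = deg s")
      case False
      show ?thesis
        by (intro exI[of _ "(0,0)"]) (simp add: isM_off[OF ZM False] dga_0[OF D1] dga_0[OF D2]
          additive.zero[OF ad1] additive.zero[OF ad2] additive.zero[OF adp])
    next
      case True
      have "d2 (Z r s) = 0" using fun_cong[OF fun_cong[OF dZ, of r], of s] by (simp add: mmap_def)
      then have cz: "Z r s \<in> cocycles A2 d2 1"
        using isM_in[OF ZM] unfolding cocycles_def by simp
      then obtain x where x: "x \<in> cocycles A1 d1 1" "Z r s - \<phi> x \<in> coboundaries A2 d2 1"
        using surj1 unfolding induces_surj_H_def by blast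
      then obtain v where "v \<in> A2 0" "Z r s - \<phi> x = d2 v" unfolding coboundaries_def by auto
      then show ?thesis using x(1) True unfolding cocycles_def by (intro exI[of _ "(x,v)"]) auto
    qed
  qed
  then obtain P where P: "\<And>r s. fst (P r s) \<in> A1 1 \<and> d1 (fst (P r s)) = 0 \<and> snd (P r s) \<in> A2 0 \<and>
      Z r s - \<phi> (fst (P r s)) = d2 (snd (P r s)) \<and>
      (\<not> (r \<in> I \<and> s \<in> I \<and> deg r + int k = deg s) \<longrightarrow> fst (P r s) = 0 \<and> snd (P r s) = 0)" by metis
  define Xc where "Xc = (\<lambda>r s. fst (P r s))"
  define Y where "Y = (\<lambda>r s. snd (P r s))"
  define X where "X = X0 - Xc"
  have XcM: "isM I deg A1 1 k Xc" unfolding isM_def Xc_def using P by blast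
  have YM: "isM I deg A2 0 k Y" unfolding isM_def Y_def using P by blast
  have XM: "isM I deg A1 1 k X" unfolding X_def by (rule isM_diff[OF D1 X0M XcM])
  have dXc: "mmap d1 Xc = 0" by (rule ext, rule ext) (simp add: mmap_def Xc_def P)
  have dX: "mmap d1 X = R" unfolding X_def by (simp add: mmap_diff[OF ad1] dX0 dXc)
  have dY: "mmap d2 Y = Z - mmap \<phi> Xc"
    by (rule ext, rule ext) (simp add: mmap_def Y_def Xc_def P[THEN conjunct2, THEN conjunct2, THEN conjunct2, THEN conjunct1, symmetric])
  have dY2: "mmap d2 Y = S + mmap \<phi> X"
    unfolding dY Z_def X_def by (simp add: mmap_diff[OF adp] algebra_simps)
  have c1: "conv I k (Om(k:=X)) (Om(k:=X)) = conv I k Om Om"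
  proof -
    have "conv I k (Om(k:=X)) (Om(k:=X)) = conv I k Om (Om(k:=X))"
      by (rule conv_eq_below_left) (simp_all add: kpos Om0)
    also have "\<dots> = conv I k Om Om"
      by (rule conv_eq_below_right) (simp_all add: Om0)
    finally show ?thesis .
  qed
  have c2: "conv I k w (a(k:=Y)) = conv I k w a"
    by (rule conv_eq_below_right) (simp_all add: w0)
  have c3: "conv I k (a(k:=Y)) (\<lambda>n. mmap \<phi> ((Om(k:=X)) n)) = conv I k a \<Phi> + mmap \<phi> X"
  proof -
    have "conv I k (a(k:=Y)) (\<lambda>n. mmap \<phi> ((Om(k:=X)) n)) = conv I k a (\<lambda>n. mmap \<phi> ((Om(k:=X)) n))"
      by (rule conv_eq_below_left) (simp_all add: kpos Om0 mmap_zero[OF adp])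
    also have "\<dots> = conv I k a \<Phi> + mmult I (a 0) (mmap \<phi> ((Om(k:=X)) k) - \<Phi> k)"
      by (rule conv_split_right) (simp add: \<Phi>_def)
    also have "mmap \<phi> ((Om(k:=X)) k) - \<Phi> k = mmap \<phi> X"
      by (simp add: \<Phi>_def Omk mmap_zero[OF adp])
    also have "mmult I (a 0) (mmap \<phi> X) = mmap \<phi> X"
      unfolding a0 by (rule mmult_Idr[OF fin], rule isM_off[OF isM_mmap_phi[OF Mor XM]], simp)
    finally show ?thesis .
  qed
  show ?thesis
    apply (rule exI[of _ X], rule exI[of _ Y])
    using XM YM dX dY2 c1 c2 c3 by (simp add: R_def S_def)
qed


lemma construct:
  fixes sc1 :: "'k::field \<Rightarrow> 'a::ring_1 \<Rightarrow> 'a"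
    and sc2 :: "'k \<Rightarrow> 'b::ring_1 \<Rightarrow> 'b"
    and \<phi> :: "'a \<Rightarrow> 'b" and I :: "'n set" and deg :: "'n \<Rightarrow> int"
    and w :: "nat \<Rightarrow> 'n \<Rightarrow> 'n \<Rightarrow> 'b"
  assumes D1: "is_dga sc1 A1 d1" and D2: "is_dga sc2 A2 d2"
    and Mor: "dga_morphism sc1 A1 d1 sc2 A2 d2 \<phi>"
    and inj2: "induces_inj_H A1 d1 A2 d2 \<phi> 2" and surj1: "induces_surj_H A1 d1 A2 d2 \<phi> 1"
    and fin: "finite I"
    and w0: "w 0 = 0" and wM: "\<And>n. isM I deg A2 1 n (w n)"
    and wd: "\<And>n. mmap d2 (w n) = - conv I n w w"
  shows "\<exists>(Om :: nat \<Rightarrow> 'n \<Rightarrow> 'n \<Rightarrow> 'a) (a :: nat \<Rightarrow> 'n \<Rightarrow> 'n \<Rightarrow> 'b). Om 0 = 0 \<and> a 0 = Idr I \<and>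
     (\<forall>i. isM I deg A1 1 i (Om i)) \<and> (\<forall>i. isM I deg A2 0 i (a i)) \<and>
     (\<forall>k. mmap d1 (Om k) = - conv I k Om Om \<and>
          mmap d2 (a k) = - conv I k w a + conv I k a (\<lambda>n. mmap \<phi> (Om n)))"
proof -
  have ad1: "additive d1" by (rule dga_additive[OF D1])
  have ad2: "additive d2" by (rule dga_additive[OF D2])
  have adp: "additive \<phi>" by (rule mor_additive[OF Mor])
  define Q where "Q = (\<lambda>k (Om :: nat \<Rightarrow> 'n \<Rightarrow> 'n \<Rightarrow> 'a) (a :: nat \<Rightarrow> 'n \<Rightarrow> 'n \<Rightarrow> 'b) X Y.
     isM I deg A1 1 k X \<and> isM I deg A2 0 k Y \<and>
     mmap d1 X = - conv I k (Om(k:=X)) (Om(k:=X)) \<and>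
     mmap d2 Y = - conv I k w (a(k:=Y)) + conv I k (a(k:=Y)) (\<lambda>n. mmap \<phi> ((Om(k:=X)) n)))"
  define stp where "stp = (\<lambda>k (p :: (nat \<Rightarrow> 'n \<Rightarrow> 'n \<Rightarrow> 'a) \<times> (nat \<Rightarrow> 'n \<Rightarrow> 'n \<Rightarrow> 'b)).
     (let XY = (SOME XY. Q k (fst p) (snd p) (fst XY) (snd XY))
      in ((fst p)(k := fst XY), (snd p)(k := snd XY))))"
  define Inv where "Inv = (\<lambda>n (p :: (nat \<Rightarrow> 'n \<Rightarrow> 'n \<Rightarrow> 'a) \<times> (nat \<Rightarrow> 'n \<Rightarrow> 'n \<Rightarrow> 'b)).
     fst p 0 = 0 \<and> snd p 0 = Idr I \<and>
     (\<forall>i. isM I deg A1 1 i (fst p i)) \<and> (\<forall>i. isM I deg A2 0 i (snd p i)) \<and>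
     (\<forall>i>n. fst p i = 0 \<and> snd p i = 0) \<and>
     (\<forall>m\<le>n. mmap d1 (fst p m) = - conv I m (fst p) (fst p) \<and>
          mmap d2 (snd p m) = - conv I m w (snd p) + conv I m (snd p) (\<lambda>n. mmap \<phi> (fst p n))))"
  define sq where "sq = rec_nat ((\<lambda>_. 0), (\<lambda>_. 0)(0 := Idr I)) (\<lambda>n p. stp (Suc n) p)"
  have sq0: "sq 0 = ((\<lambda>_. 0), (\<lambda>_. 0)(0 := Idr I))" by (simp add: sq_def)
  have sqS: "\<And>n. sq (Suc n) = stp (Suc n) (sq n)" by (simp add: sq_def)
  have conv00: "\<And>f g. f 0 = 0 \<Longrightarrow> conv I 0 f g = 0" by (simp add: conv_def)
  have conv00': "\<And>f g. g 0 = 0 \<Longrightarrow> conv I 0 f g = 0" by (simp add: conv_def)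
  have Inv0: "Inv 0 (sq 0)"
    unfolding Inv_def sq0
  proof (intro conjI allI impI)
    show "mmap d1 (fst ((\<lambda>_. 0), (\<lambda>_. 0)(0 := Idr I)) m) =
      - conv I m (fst ((\<lambda>_. 0), (\<lambda>_. 0)(0 := Idr I))) (fst ((\<lambda>_. 0), (\<lambda>_. 0)(0 := Idr I)))" for m
      by (simp add: mmap_zero[OF ad1] conv_def)
    show "mmap d2 (snd ((\<lambda>_. 0), (\<lambda>_. 0)(0 := Idr I)) m) =
      - conv I m w (snd ((\<lambda>_. 0), (\<lambda>_. 0)(0 := Idr I))) +
      conv I m (snd ((\<lambda>_. 0), (\<lambda>_. 0)(0 := Idr I))) (\<lambda>n. mmap \<phi> (fst ((\<lambda>_. 0), (\<lambda>_. 0)(0 := Idr I)) n))"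
      if "m \<le> 0" for m
    proof -
      have m: "m = 0" using that by simp
      have "mmap d2 (Idr I :: 'n \<Rightarrow> 'n \<Rightarrow> 'b) = 0"
        by (rule ext, rule ext) (simp add: mmap_def Idr_def dga_d1[OF D2] additive.zero[OF ad2])
      then show ?thesis unfolding m
        by (simp add: conv00 w0 conv00' mmap_zero[OF adp])
    qed
  qed (auto simp: isM_zero[OF D1] isM_zero[OF D2] isM_Idr[OF D2])
  have InvS: "Inv (Suc n) (stp (Suc n) p)" if I: "Inv n p" for n p
  proof -
    let ?k = "Suc n"
    obtain Om a where p: "p = (Om, a)" by (cases p)
    have I': "Om 0 = 0" "a 0 = Idr I" "\<And>i. isM I deg A1 1 i (Om i)" "\<And>i. isM I deg A2 0 i (a i)"
      "\<And>i. i > n \<Longrightarrow> Om i = 0 \<and> a i = 0"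
      "\<And>m. m \<le> n \<Longrightarrow> mmap d1 (Om m) = - conv I m Om Om \<and>
          mmap d2 (a m) = - conv I m w a + conv I m a (\<lambda>n. mmap \<phi> (Om n))"
      using I unfolding Inv_def p by auto
    have "\<exists>X Y. Q ?k Om a X Y"
      unfolding Q_def
      by (rule step[OF D1 D2 Mor inj2 surj1 fin _ w0 wM wd I'(1) _ I'(3) I'(2) _ I'(4)])
         (use I' in auto)
    then have "\<exists>XY. Q ?k Om a (fst XY) (snd XY)" by auto
    then have QS: "Q ?k Om a (fst (SOME XY. Q ?k Om a (fst XY) (snd XY))) (snd (SOME XY. Q ?k Om a (fst XY) (snd XY)))"
      by (rule someI_ex)
    define X where "X = fst (SOME XY. Q ?k Om a (fst XY) (snd XY))"
    define Y where "Y = snd (SOME XY. Q ?k Om a (fst XY) (snd XY))"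
    have QXY: "Q ?k Om a X Y" unfolding X_def Y_def by (rule QS)
    have st: "stp ?k p = (Om(?k := X), a(?k := Y))"
      unfolding stp_def p X_def Y_def by (simp add: Let_def)
    have Q': "isM I deg A1 1 ?k X" "isM I deg A2 0 ?k Y"
      "mmap d1 X = - conv I ?k (Om(?k:=X)) (Om(?k:=X))"
      "mmap d2 Y = - conv I ?k w (a(?k:=Y)) + conv I ?k (a(?k:=Y)) (\<lambda>n. mmap \<phi> ((Om(?k:=X)) n))"
      using QXY unfolding Q_def by blast+
    show ?thesis unfolding st Inv_def fst_conv snd_conv
    proof (intro conjI allI impI)
      show "(Om(?k := X)) 0 = 0" using I' by simp
      show "(a(?k := Y)) 0 = Idr I" using I' by simp
      show "isM I deg A1 1 i ((Om(?k := X)) i)" for i using I' Q' by simp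
      show "isM I deg A2 0 i ((a(?k := Y)) i)" for i using I' Q' by simp
      show "(Om(?k := X)) i = 0" "(a(?k := Y)) i = 0" if "?k < i" for i using I'(5)[of i] that by auto
      fix m assume m: "m \<le> ?k"
      show "mmap d1 ((Om(?k := X)) m) = - conv I m (Om(?k := X)) (Om(?k := X))"
      proof (cases "m = ?k")
        case True then show ?thesis using Q' by simp
      next
        case False
        then have mn: "m \<le> n" using m by simp
        have "conv I m (Om(?k := X)) (Om(?k := X)) = conv I m Om Om" by (rule conv_cong) (use mn in auto)
        then show ?thesis using I'(6)[OF mn] False by simp
      qed
      show "mmap d2 ((a(?k := Y)) m) = - conv I m w (a(?k := Y)) +
         conv I m (a(?k := Y)) (\<lambda>n. mmap \<phi> ((Om(?k := X)) n))"
      proof (cases "m = ?k")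
        case True then show ?thesis using Q' by simp
      next
        case False
        then have mn: "m \<le> n" using m by simp
        have "conv I m w (a(?k := Y)) = conv I m w a" by (rule conv_cong) (use mn in auto)
        moreover have "conv I m (a(?k := Y)) (\<lambda>n. mmap \<phi> ((Om(?k := X)) n)) = conv I m a (\<lambda>n. mmap \<phi> (Om n))"
          by (rule conv_cong) (use mn in auto)
        ultimately show ?thesis using I'(6)[OF mn] False by simp
      qed
    qed
  qed
  have Inv: "Inv n (sq n)" for n
    by (induct n) (simp_all add: Inv0 sqS InvS)
  have stab: "m \<le> n \<Longrightarrow> fst (sq n) m = fst (sq m) m \<and> snd (sq n) m = snd (sq m) m" for m n
  proof (induct n)
    case 0 then show ?case by simp
  next
    case (Suc n)
    show ?case
    proof (cases "m = Suc n")
      case True then show ?thesis by simp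
    next
      case False
      then have "m \<le> n" using Suc by simp
      then show ?thesis using Suc False
        by (simp add: sqS stp_def Let_def)
    qed
  qed
  define Om where "Om = (\<lambda>i. fst (sq i) i)"
  define a where "a = (\<lambda>i. snd (sq i) i)"
  show ?thesis
  proof (intro exI[of _ Om] exI[of _ a] conjI allI)
    show "Om 0 = 0" using Inv[of 0] unfolding Om_def Inv_def by simp
    show "a 0 = Idr I" using Inv[of 0] unfolding a_def Inv_def by simp
    show "isM I deg A1 1 i (Om i)" for i using Inv[of i] unfolding Om_def Inv_def by simp
    show "isM I deg A2 0 i (a i)" for i using Inv[of i] unfolding a_def Inv_def by simp
    fix k
    have e1: "\<And>i. i \<le> k \<Longrightarrow> fst (sq k) i = Om i" using stab unfolding Om_def by blast
    have e2: "\<And>i. i \<le> k \<Longrightarrow> snd (sq k) i = a i" using stab unfolding a_def by blast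
    have Ik: "mmap d1 (fst (sq k) k) = - conv I k (fst (sq k)) (fst (sq k)) \<and>
          mmap d2 (snd (sq k) k) = - conv I k w (snd (sq k)) + conv I k (snd (sq k)) (\<lambda>n. mmap \<phi> (fst (sq k) n))"
      using Inv[of k] unfolding Inv_def by simp
    have c1: "conv I k (fst (sq k)) (fst (sq k)) = conv I k Om Om" by (rule conv_cong) (simp_all add: e1)
    have c2: "conv I k w (snd (sq k)) = conv I k w a" by (rule conv_cong) (simp_all add: e2)
    have c3: "conv I k (snd (sq k)) (\<lambda>n. mmap \<phi> (fst (sq k) n)) = conv I k a (\<lambda>n. mmap \<phi> (Om n))"
      by (rule conv_cong) (simp_all add: e1 e2)
    show "mmap d1 (Om k) = - conv I k Om Om" using Ik c1 e1[of k] by simp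
    show "mmap d2 (a k) = - conv I k w a + conv I k a (\<lambda>n. mmap \<phi> (Om n))" using Ik c2 c3 e2[of k] by simp
  qed
qed


lemma conv_left0: "f 0 = 0 \<Longrightarrow> conv I n f g = (\<Sum>i\<in>{1..n}. mmult I (f i) (g (n-i)))"
  unfolding conv_def
  by (rule sum.mono_neutral_right) (auto simp: Suc_le_eq)

lemma conv_right0: "g 0 = 0 \<Longrightarrow> conv I n f g = (\<Sum>i\<in>{0..<n}. mmult I (f i) (g (n-i)))"
  unfolding conv_def
  by (rule sum.mono_neutral_right) (auto simp: Suc_le_eq)

lemma conv_inner: "f 0 = 0 \<Longrightarrow> g 0 = 0 \<Longrightarrow> conv I n f g = (\<Sum>i\<in>{1..<n}. mmult I (f i) (g (n-i)))"
  unfolding conv_def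
  by (rule sum.mono_neutral_right) (auto simp: Suc_le_eq)

lemma mmult_agree: "(\<And>t. t \<in> I \<Longrightarrow> M r t = M' r t) \<Longrightarrow> (\<And>t. t \<in> I \<Longrightarrow> N t s = N' t s) \<Longrightarrow>
   mmult I M N r s = mmult I M' N' r s"
  unfolding mmult_def by (intro sum.cong refl) auto

lemma isM_in_AU: "isM I deg A p i M \<Longrightarrow> in_AU I deg A p i M"
  unfolding isM_def in_AU_def by blast

theorem lemma10p3:
  fixes sc1 :: "'k::{real_normed_field,banach} \<Rightarrow> 'a::ring_1 \<Rightarrow> 'a"
    and A1 :: "nat \<Rightarrow> 'a set" and d1 :: "'a \<Rightarrow> 'a"
    and sc2 :: "'k \<Rightarrow> 'b::ring_1 \<Rightarrow> 'b"
    and A2 :: "nat \<Rightarrow> 'b set" and d2 :: "'b \<Rightarrow> 'b"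
    and \<phi> :: "'a \<Rightarrow> 'b"
    and I :: "'n set" and deg :: "'n \<Rightarrow> int"
    and \<omega> :: "nat \<Rightarrow> 'n \<Rightarrow> 'n \<Rightarrow> 'b"
  assumes "is_dga sc1 A1 d1" and "is_dga sc2 A2 d2"
    and "cohom_connected sc1 A1 d1" and "cohom_connected sc2 A2 d2"
    and "dga_morphism sc1 A1 d1 sc2 A2 d2 \<phi>"
    and "induces_inj_H A1 d1 A2 d2 \<phi> 0" and "induces_surj_H A1 d1 A2 d2 \<phi> 0"
    and "induces_inj_H A1 d1 A2 d2 \<phi> 1" and "induces_surj_H A1 d1 A2 d2 \<phi> 1"
    and "induces_inj_H A1 d1 A2 d2 \<phi> 2"
    and "finite I"
    and "\<forall>i\<ge>1. in_AU I deg A2 1 i (\<omega> i)"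
    and "\<forall>k\<ge>1. meq I (mmap d2 (\<omega> k)) (- (\<Sum>i\<in>{1..<k}. mmult I (\<omega> i) (\<omega> (k - i))))"
  shows "\<exists>\<Omega> a.
    (\<forall>i\<ge>1. in_AU I deg A1 1 i (\<Omega> i)) \<and>
    (\<forall>i\<ge>1. in_AU I deg A2 0 i (a i)) \<and>
    (\<forall>k\<ge>1.
       meq I (mmap d1 (\<Omega> k)) (- (\<Sum>i\<in>{1..<k}. mmult I (\<Omega> i) (\<Omega> (k - i)))) \<and>
       meq I (mmap d2 (a k))
         (- (\<Sum>i\<in>{1..k}. mmult I (\<omega> i) (with_id0 a (k - i)))
          + (\<Sum>i\<in>{0..<k}. mmult I (with_id0 a i) (mmap \<phi> (\<Omega> (k - i))))))"
proof -
  note D1 = assms(1) and D2 = assms(2) and Mor = assms(5) and inj2 = assms(10) and surj1 = assms(9)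
    and fin = assms(11) and \<omega>M = assms(12) and \<omega>d = assms(13)
  have ad2: "additive d2" by (rule dga_additive[OF D2])
  have adp: "additive \<phi>" by (rule mor_additive[OF Mor])
  define w where "w = (\<lambda>n. if n = 0 then 0 else (\<lambda>r s. if r \<in> I \<and> s \<in> I then \<omega> n r s else 0))"
  have w0: "w 0 = 0" by (simp add: w_def)
  have wI: "\<And>n r s. 1 \<le> n \<Longrightarrow> r \<in> I \<Longrightarrow> s \<in> I \<Longrightarrow> w n r s = \<omega> n r s" by (simp add: w_def)
  have wM: "isM I deg A2 1 n (w n)" for n
  proof (cases "n = 0")
    case True then show ?thesis by (simp add: w0 isM_zero[OF D2])
  next
    case False
    then have "in_AU I deg A2 1 n (\<omega> n)" using \<omega>M by simp
    then show ?thesis using False unfolding isM_def in_AU_def w_def by (auto simp: dga_0[OF D2])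
  qed
  have wd: "mmap d2 (w n) = - conv I n w w" for n
  proof (cases "n = 0")
    case True then show ?thesis by (simp add: w0 conv_def mmap_zero[OF ad2])
  next
    case False
    have cM: "isM I deg A2 2 n (conv I n w w)"
      using isM_conv[OF D2 wM wM, where k=n] by (simp only: one_add_one)
    show ?thesis
    proof (rule ext, rule ext)
      fix r s
      show "mmap d2 (w n) r s = (- conv I n w w) r s"
      proof (cases "r \<in> I \<and> s \<in> I")
        case True
        have "mmap d2 (w n) r s = d2 (\<omega> n r s)" using True False by (simp add: mmap_def w_def)
        also have "\<dots> = (- (\<Sum>i\<in>{1..<n}. mmult I (\<omega> i) (\<omega> (n - i)))) r s"
          using \<omega>d False True unfolding meq_def mmap_def by simp
        also have "\<dots> = - (\<Sum>i\<in>{1..<n}. mmult I (\<omega> i) (\<omega> (n - i)) r s)"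
          by (simp add: sum_mat_apply)
        also have "(\<Sum>i\<in>{1..<n}. mmult I (\<omega> i) (\<omega> (n - i)) r s) = (\<Sum>i\<in>{1..<n}. mmult I (w i) (w (n - i)) r s)"
          by (intro sum.cong refl mmult_agree) (use True in \<open>auto simp: wI\<close>)
        also have "\<dots> = conv I n w w r s"
          by (simp add: conv_inner[of w w, OF w0 w0] sum_mat_apply)
        finally show ?thesis by simp
      next
        case False
        have "conv I n w w r s = 0" by (rule isM_off[OF cM]) (use False in auto)
        moreover have "w n r s = 0" using False by (auto simp: w_def)
        ultimately show ?thesis by (simp add: mmap_def additive.zero[OF ad2])
      qed
    qed
  qed
  obtain Om a where C: "Om 0 = 0" "a 0 = Idr I" "\<And>i. isM I deg A1 1 i (Om i)" "\<And>i. isM I deg A2 0 i (a i)"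
    "\<And>k. mmap d1 (Om k) = - conv I k Om Om"
    "\<And>k. mmap d2 (a k) = - conv I k w a + conv I k a (\<lambda>n. mmap \<phi> (Om n))"
    using construct[OF D1 D2 Mor inj2 surj1 fin w0 wM wd] by blast
  show ?thesis
  proof (intro exI[of _ Om] exI[of _ a] conjI allI impI)
    show "in_AU I deg A1 1 i (Om i)" for i by (rule isM_in_AU[OF C(3)])
    show "in_AU I deg A2 0 i (a i)" for i by (rule isM_in_AU[OF C(4)])
    fix k :: nat assume k: "1 \<le> k"
    show "meq I (mmap d1 (Om k)) (- (\<Sum>i\<in>{1..<k}. mmult I (Om i) (Om (k - i))))"
      unfolding meq_def C(5) conv_inner[of Om Om, OF C(1) C(1)] by simp
    have \<Phi>0: "mmap \<phi> (Om 0) = 0" by (simp add: C(1) mmap_zero[OF adp])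
    show "meq I (mmap d2 (a k))
         (- (\<Sum>i\<in>{1..k}. mmult I (\<omega> i) (with_id0 a (k - i)))
          + (\<Sum>i\<in>{0..<k}. mmult I (with_id0 a i) (mmap \<phi> (Om (k - i)))))"
      unfolding meq_def
    proof (intro ballI)
      fix r s assume r: "r \<in> I" and s: "s \<in> I"
      have aw: "\<And>j t. t \<in> I \<Longrightarrow> a j t s = with_id0 a j t s"
        using s by (simp add: with_id0_def C(2) Idr_def mat_id_def)
      have aw2: "\<And>j t. t \<in> I \<Longrightarrow> a j r t = with_id0 a j r t"
        using r by (simp add: with_id0_def C(2) Idr_def mat_id_def)
      have e1: "conv I k w a r s = (\<Sum>i\<in>{1..k}. mmult I (\<omega> i) (with_id0 a (k - i)) r s)"
        unfolding conv_left0[of w, OF w0] sum_mat_apply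
        by (intro sum.cong refl mmult_agree) (use r in \<open>auto simp: wI aw\<close>)
      have e2: "conv I k a (\<lambda>n. mmap \<phi> (Om n)) r s = (\<Sum>i\<in>{0..<k}. mmult I (with_id0 a i) (mmap \<phi> (Om (k - i))) r s)"
        unfolding conv_right0[of "\<lambda>n. mmap \<phi> (Om n)", OF \<Phi>0] sum_mat_apply
        by (intro sum.cong refl mmult_agree) (auto simp: aw2)
      show "mmap d2 (a k) r s = (- (\<Sum>i\<in>{1..k}. mmult I (\<omega> i) (with_id0 a (k - i)))
          + (\<Sum>i\<in>{0..<k}. mmult I (with_id0 a i) (mmap \<phi> (Om (k - i))))) r s"
        unfolding C(6) by (simp add: e1 e2 sum_mat_apply)
    qed
  qed
qed

end
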